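(* Let $\gamma$ and $\gamma'$ be two circular curves that are mutually monotone. Then $\gamma$ and $\gamma'$ have $O(m+m')$ proper intersection points, where $m=\lVert\gamma\rVert$ and $m'=\lVert\gamma'\rVert$.
   Context: A circular curve is a curve in $\mathbb{R}^2$ homeomorphic to a closed interval that is the union of finitely many circular arcs (connected portions of circles, segments included) meeting only at endpoints; its complexity $\lVert\cdot\rVert$ is the number of its arcs plus vertices. A curve $\gamma$ is $\vec v$-monotone for $\vec v\in\mathbb{S}^1$ if there is a homeomorphism $f:[0,1]\to\gamma$ with $\langle\vec v,f(a)\rangle<\langle\vec v,f(b)\rangle$ whenever $a<b$; $\gamma,\gamma'$ are mutually monotone if some $\vec v\in\mathbb{S}^1$ makes both $\vec v$-monotone. A point $p$ is a proper intersection point of $\gamma$ and $\gamma'$ if $p\in\gamma\cap\gamma'$ and $p$ is isolated in $\gamma\cap\gamma'$. *)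

theory Defs
  imports "HOL-Analysis.Analysis"
begin

text \<open>The plane R^2 is modelled as the type complex (a real inner product space).\<close>

definition circular_arc :: "(real \<Rightarrow> complex) \<Rightarrow> bool" where
  "circular_arc g \<longleftrightarrow> arc g \<and>
     ((\<exists>c r. r > 0 \<and> path_image g \<subseteq> sphere c r) \<or>
      path_image g = closed_segment (pathstart g) (pathfinish g))"

definition arc_vertices :: "(real \<Rightarrow> complex) list \<Rightarrow> complex set" where
  "arc_vertices gs = (\<Union>g\<in>set gs. {pathstart g, pathfinish g})"

definition circular_curve :: "(real \<Rightarrow> complex) list \<Rightarrow> complex set \<Rightarrow> bool" where
  "circular_curve gs C \<longleftrightarrow>
     C homeomorphic {0..1::real} \<and>
     C = (\<Union>g\<in>set gs. path_image g) \<and>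
     (\<forall>g\<in>set gs. circular_arc g) \<and>
     (\<forall>i<length gs. \<forall>j<length gs. i \<noteq> j \<longrightarrow>
        path_image (gs!i) \<inter> path_image (gs!j) \<subseteq>
          {pathstart (gs!i), pathfinish (gs!i)} \<inter> {pathstart (gs!j), pathfinish (gs!j)})"

definition complexity :: "(real \<Rightarrow> complex) list \<Rightarrow> nat" where
  "complexity gs = length gs + card (arc_vertices gs)"

definition dir_monotone :: "complex \<Rightarrow> complex set \<Rightarrow> bool" where
  "dir_monotone v C \<longleftrightarrow> (\<exists>f h. homeomorphism {0..1::real} C f h \<and>
     (\<forall>a\<in>{0..1}. \<forall>b\<in>{0..1}. a < b \<longrightarrow> inner v (f a) < inner v (f b)))"

definition mutually_monotone :: "complex set \<Rightarrow> complex set \<Rightarrow> bool" where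
  "mutually_monotone C C' \<longleftrightarrow> (\<exists>v. norm v = 1 \<and> dir_monotone v C \<and> dir_monotone v C')"

definition proper_intersections :: "complex set \<Rightarrow> complex set \<Rightarrow> complex set" where
  "proper_intersections C C' = {p. p \<in> C \<inter> C' \<and> p isolated_in (C \<inter> C')}"

end

theory Submission
  imports Defs
begin


lemma card_le2_sub: "S \<subseteq> {x, y} \<Longrightarrow> finite S \<and> card S \<le> 2"
proof -
  assume a: "S \<subseteq> {x, y}"
  have "card S \<le> card {x,y}" using a by (intro card_mono) auto
  also have "\<dots> \<le> 2" by (simp add: card_insert_le_m1)
  finally show ?thesis using a finite_subset by blast
qed

lemma quad_card:
  fixes a b c :: real
  assumes "a \<noteq> 0" "S \<subseteq> {t. a*t^2+b*t+c = 0}"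
  shows "finite S \<and> card S \<le> 2"
proof (cases "S = {}")
  case True then show ?thesis by simp
next
  case False
  then obtain x where x: "x \<in> S" by auto
  have "S \<subseteq> {x, -b/a - x}"
  proof
    fix y assume y: "y \<in> S"
    have ex: "a*x^2+b*x+c = 0" "a*y^2+b*y+c=0" using x y assms(2) by auto
    have "(y-x)*(a*(y+x)+b) = 0" using ex by (simp add: algebra_simps power2_eq_square)
    hence "y = x \<or> a*(y+x)+b = 0" by simp
    then show "y \<in> {x, -b/a - x}" using assms(1) by (auto simp: field_simps)
  qed
  then show ?thesis by (rule card_le2_sub)
qed

definition Iso :: "real \<Rightarrow> real \<Rightarrow> (real \<Rightarrow> real) \<Rightarrow> (real \<Rightarrow> real) \<Rightarrow> real set" where
  "Iso lo hi yF yG = {t \<in> {lo<..<hi}. yF t = yG t \<and>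
     (\<exists>e>0. \<forall>s\<in>{lo<..<hi}. yF s = yG s \<longrightarrow> \<bar>s - t\<bar> < e \<longrightarrow> s = t)}"

lemma Iso_sym: "Iso lo hi yF yG = Iso lo hi yG yF"
  unfolding Iso_def by (auto simp: eq_commute)

lemma near_pt:
  fixes t e lo hi :: real
  assumes "t \<in> {lo<..<hi}" "e > 0"
  shows "\<exists>s. s \<in> {lo<..<hi} \<and> s \<noteq> t \<and> \<bar>s - t\<bar> < e"
proof -
  define m where "m = min e (hi - t)"
  have m: "m > 0" "m \<le> hi - t" "m \<le> e" using assms unfolding m_def by auto
  have "t + m/2 \<in> {lo<..<hi} \<and> t + m/2 \<noteq> t \<and> \<bar>t + m/2 - t\<bar> < e" using assms m by auto
  then show ?thesis by blast
qed

lemma not_Iso: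
  assumes "t \<in> {lo<..<hi}" "e > 0" "\<And>s. s \<in> {lo<..<hi} \<Longrightarrow> \<bar>s - t\<bar> < e \<Longrightarrow> yF s = yG s"
  shows "t \<notin> Iso lo hi yF yG"
proof
  assume "t \<in> Iso lo hi yF yG"
  then obtain e1 where e1: "e1 > 0" "\<forall>s\<in>{lo<..<hi}. yF s = yG s \<longrightarrow> \<bar>s - t\<bar> < e1 \<longrightarrow> s = t"
    unfolding Iso_def by auto
  obtain s where s: "s \<in> {lo<..<hi}" "s \<noteq> t" "\<bar>s - t\<bar> < min e e1"
    using near_pt[OF assms(1), of "min e e1"] e1 assms(2) by auto
  then show False using e1 assms(3)[of s] by auto
qed

lemma Iso_sub: "Iso lo hi yF yG \<subseteq> {t. yF t = yG t}"
  unfolding Iso_def by auto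

lemma circ_line:
  fixes t tc yc R al be :: real
  assumes "(t-tc)^2 + (al*t+be-yc)^2 = R"
  shows "(1+al^2)*t^2 + (2*al*(be-yc) - 2*tc)*t + (tc^2+(be-yc)^2-R) = 0"
  using assms by (simp add: algebra_simps power2_eq_square)

lemma iso_aa:
  fixes lo hi :: real
  assumes "lo < hi" "\<forall>t\<in>{lo<..<hi}. yF t = al*t+be" "\<forall>t\<in>{lo<..<hi}. yG t = al'*t+be'"
  shows "finite (Iso lo hi yF yG) \<and> card (Iso lo hi yF yG) \<le> 2"
proof (cases "al = al' \<and> be = be'")
  case True
  have "Iso lo hi yF yG = {}"
  proof -
    { fix t assume t: "t \<in> Iso lo hi yF yG"
      then have tJ: "t \<in> {lo<..<hi}" unfolding Iso_def by auto
      have "t \<notin> Iso lo hi yF yG"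
        by (rule not_Iso[OF tJ, of 1]) (use True assms in auto)
      with t have False by simp }
    then show ?thesis by auto
  qed
  then show ?thesis by simp
next
  case False
  have "Iso lo hi yF yG \<subseteq> {(be'-be)/(al-al'), (be'-be)/(al-al')}"
  proof
    fix t assume t: "t \<in> Iso lo hi yF yG"
    then have "t \<in> {lo<..<hi}" "yF t = yG t" unfolding Iso_def by auto
    then have e: "al*t+be = al'*t+be'" using assms by auto
    show "t \<in> {(be'-be)/(al-al'), (be'-be)/(al-al')}"
    proof (cases "al = al'")
      case True then show ?thesis using e False by auto
    next
      case f: False
      then have "t*(al-al') = be'-be" using e by (simp add: algebra_simps)
      then show ?thesis using f by (simp add: field_simps)
    qed
  qed
  then show ?thesis by (rule card_le2_sub)
qed

lemma iso_ac:
  fixes lo hi :: real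
  assumes "\<forall>t\<in>{lo<..<hi}. yF t = al*t+be" "\<forall>t\<in>{lo<..<hi}. (t-tc)^2 + (yG t - yc)^2 = R"
  shows "finite (Iso lo hi yF yG) \<and> card (Iso lo hi yF yG) \<le> 2"
proof (rule quad_card[of "1+al^2" _ "2*al*(be-yc) - 2*tc" "tc^2+(be-yc)^2-R"])
  show "1 + al^2 \<noteq> (0::real)" by (metis add_pos_nonneg not_one_le_zero zero_le_power2 zero_less_one order_less_irrefl)
  show "Iso lo hi yF yG \<subseteq> {t. (1+al^2)*t^2 + (2*al*(be-yc) - 2*tc)*t + (tc^2+(be-yc)^2-R) = 0}"
  proof
    fix t assume t: "t \<in> Iso lo hi yF yG"
    then have "t \<in> {lo<..<hi}" "yF t = yG t" unfolding Iso_def by auto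
    then have "(t-tc)^2 + (al*t+be-yc)^2 = R" using assms by auto
    then show "t \<in> {t. (1+al^2)*t^2 + (2*al*(be-yc) - 2*tc)*t + (tc^2+(be-yc)^2-R) = 0}"
      using circ_line by auto
  qed
qed

lemma aux_lin: fixes d D K t :: real shows "d \<noteq> 0 \<Longrightarrow> (K - 2*t*D)/(2*d) = (-D/d)*t + K/(2*d)"
  by (simp add: field_simps)

lemma iso_cc_diff:
  fixes lo hi :: real
  assumes "\<forall>t\<in>{lo<..<hi}. (t-tc)^2 + (yF t - yc)^2 = R"
    "\<forall>t\<in>{lo<..<hi}. (t-tc')^2 + (yG t - yc')^2 = R'"
    "(tc,yc,R) \<noteq> (tc',yc',R')"
  shows "finite (Iso lo hi yF yG) \<and> card (Iso lo hi yF yG) \<le> 2"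
proof -
  define K where "K = tc'^2-tc^2+yc'^2-yc^2+R-R'"
  have lin: "2*t*(tc'-tc) + 2*yF t*(yc'-yc) = K" if t: "t \<in> Iso lo hi yF yG" for t
  proof -
    from t have tJ: "t \<in> {lo<..<hi}" and eq: "yF t = yG t" unfolding Iso_def by auto
    have "(t-tc)^2 + (yF t - yc)^2 = R" using assms(1) tJ by blast
    moreover have "(t-tc')^2 + (yG t - yc')^2 = R'" using assms(2) tJ by blast
    ultimately have "(t-tc)^2 + (yF t - yc)^2 = R" "(t-tc')^2 + (yF t - yc')^2 = R'" using eq by auto
    then show ?thesis unfolding K_def by (simp add: algebra_simps power2_eq_square)
  qed
  show ?thesis
  proof (cases "yc = yc'")
    case False
    define al where "al = -(tc'-tc)/(yc'-yc)"
    define be where "be = K/(2*(yc'-yc))"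
    show ?thesis
    proof (rule quad_card[of "1+al^2" _ "2*al*(be-yc) - 2*tc" "tc^2+(be-yc)^2-R"])
      show "1 + al^2 \<noteq> (0::real)" by (metis add_pos_nonneg not_one_le_zero zero_le_power2 zero_less_one order_less_irrefl)
      show "Iso lo hi yF yG \<subseteq> {t. (1+al^2)*t^2 + (2*al*(be-yc) - 2*tc)*t + (tc^2+(be-yc)^2-R) = 0}"
      proof
        fix t assume t: "t \<in> Iso lo hi yF yG"
        then have "t \<in> {lo<..<hi}" unfolding Iso_def by auto
        then have c: "(t-tc)^2 + (yF t - yc)^2 = R" using assms by auto
        have d: "yc' - yc \<noteq> 0" using False by simp
        have "yF t * (2*(yc'-yc)) = K - 2*t*(tc'-tc)" using lin[OF t] by (simp add: algebra_simps)
        then have "yF t = (K - 2*t*(tc'-tc)) / (2*(yc'-yc))" using d by (simp add: field_simps)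
        also have "\<dots> = al*t+be" unfolding al_def be_def using d by (rule aux_lin)
        finally have "yF t = al*t+be" .
        then have "(t-tc)^2 + (al*t+be-yc)^2 = R" using c by simp
        then show "t \<in> {t. (1+al^2)*t^2 + (2*al*(be-yc) - 2*tc)*t + (tc^2+(be-yc)^2-R) = 0}"
          using circ_line by auto
      qed
    qed
  next
    case True
    show ?thesis
    proof (cases "tc = tc'")
      case True2: True
      have "Iso lo hi yF yG = {}"
      proof -
        { fix t assume t: "t \<in> Iso lo hi yF yG"
          then have "t \<in> {lo<..<hi}" "yF t = yG t" unfolding Iso_def by auto
          then have "R = R'" using assms(1,2) True True2 by force
          then have False using assms(3) True True2 by simp }
        then show ?thesis by auto
      qed
      then show ?thesis by simp
    next
      case False
      have "Iso lo hi yF yG \<subseteq> {K/(2*(tc'-tc)), K/(2*(tc'-tc))}"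
      proof
        fix t assume t: "t \<in> Iso lo hi yF yG"
        have "2*t*(tc'-tc) = K" using lin[OF t] True by simp
        then show "t \<in> {K/(2*(tc'-tc)), K/(2*(tc'-tc))}" using False by (simp add: field_simps)
      qed
      then show ?thesis by (rule card_le2_sub)
    qed
  qed
qed

lemma iso_cc_same:
  fixes lo hi :: real
  assumes "\<forall>t\<in>{lo<..<hi}. (t-tc)^2 + (yF t - yc)^2 = R"
    "\<forall>t\<in>{lo<..<hi}. (t-tc)^2 + (yG t - yc)^2 = R"
    "continuous_on {lo<..<hi} yF" "continuous_on {lo<..<hi} yG"
  shows "finite (Iso lo hi yF yG) \<and> card (Iso lo hi yF yG) \<le> 2"
proof (rule quad_card[of 1 _ "-2*tc" "tc^2-R"])
  show "Iso lo hi yF yG \<subseteq> {t. 1*t^2 + (-2*tc)*t + (tc^2-R) = 0}"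
  proof
    fix t assume t: "t \<in> Iso lo hi yF yG"
    then have tJ: "t \<in> {lo<..<hi}" and eq: "yF t = yG t" unfolding Iso_def by auto
    show "t \<in> {t. 1*t^2 + (-2*tc)*t + (tc^2-R) = 0}"
    proof (rule ccontr)
      assume "t \<notin> {t. 1*t^2 + (-2*tc)*t + (tc^2-R) = 0}"
      then have "(t-tc)^2 \<noteq> R" by (simp add: algebra_simps power2_eq_square)
      moreover have "(t-tc)^2 + (yF t - yc)^2 = R" using assms(1) tJ by auto
      ultimately have ne: "yF t - yc \<noteq> 0" by auto
      define h where "h = (\<lambda>s. (yF s - yc) + (yG s - yc))"
      have ch: "continuous_on {lo<..<hi} h" unfolding h_def
        by (intro continuous_intros assms(3,4))
      have "h t \<noteq> 0" unfolding h_def using eq ne by simp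
      then obtain e where e: "e > 0" "\<forall>s. dist t s < e \<longrightarrow> h s \<noteq> 0"
        using continuous_on_open_avoid[OF ch _ tJ, of 0] by auto
      have "t \<notin> Iso lo hi yF yG"
      proof (rule not_Iso[OF tJ e(1)])
        fix s assume s: "s \<in> {lo<..<hi}" "\<bar>s - t\<bar> < e"
        then have hs: "h s \<noteq> 0" using e(2) by (simp add: dist_real_def abs_minus_commute)
        have "(yF s - yc)^2 = (yG s - yc)^2" using assms(1,2) s(1) by force
        then have "yF s - yc = yG s - yc \<or> yF s - yc = -(yG s - yc)"
          using power2_eq_iff by blast
        then show "yF s = yG s" using hs unfolding h_def by auto
      qed
      then show False using t by simp
    qed
  qed
qed simp

lemma iso_card:
  fixes lo hi :: real
  assumes "lo < hi" "continuous_on {lo<..<hi} yF" "continuous_on {lo<..<hi} yG"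
    "(\<exists>al be. \<forall>t\<in>{lo<..<hi}. yF t = al*t+be) \<or> (\<exists>tc yc R. \<forall>t\<in>{lo<..<hi}. (t-tc)^2 + (yF t - yc)^2 = R)"
    "(\<exists>al be. \<forall>t\<in>{lo<..<hi}. yG t = al*t+be) \<or> (\<exists>tc yc R. \<forall>t\<in>{lo<..<hi}. (t-tc)^2 + (yG t - yc)^2 = R)"
  shows "finite (Iso lo hi yF yG) \<and> card (Iso lo hi yF yG) \<le> 2"
  using assms(4)
proof (elim disjE exE)
  fix al be assume F: "\<forall>t\<in>{lo<..<hi}. yF t = al*t+be"
  show ?thesis using assms(5)
  proof (elim disjE exE)
    fix al' be' assume "\<forall>t\<in>{lo<..<hi}. yG t = al'*t+be'"
    then show ?thesis using iso_aa[OF assms(1) F] by blast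
  next
    fix tc yc R assume "\<forall>t\<in>{lo<..<hi}. (t-tc)^2 + (yG t - yc)^2 = R"
    then show ?thesis using iso_ac[OF F] by blast
  qed
next
  fix tc yc R assume F: "\<forall>t\<in>{lo<..<hi}. (t-tc)^2 + (yF t - yc)^2 = R"
  show ?thesis using assms(5)
  proof (elim disjE exE)
    fix al' be' assume G: "\<forall>t\<in>{lo<..<hi}. yG t = al'*t+be'"
    show ?thesis using iso_ac[OF G F] Iso_sym by metis
  next
    fix tc' yc' R' assume G: "\<forall>t\<in>{lo<..<hi}. (t-tc')^2 + (yG t - yc')^2 = R'"
    show ?thesis
    proof (cases "(tc,yc,R) = (tc',yc',R')")
      case True
      then show ?thesis using iso_cc_same[OF F _ assms(2,3)] G by auto
    next
      case False
      then show ?thesis using iso_cc_diff[OF F G] by blast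
    qed
  qed
qed



definition lo :: "complex \<Rightarrow> (real \<Rightarrow> complex) \<Rightarrow> real" where
  "lo v g = min (inner v (pathstart g)) (inner v (pathfinish g))"
definition hi :: "complex \<Rightarrow> (real \<Rightarrow> complex) \<Rightarrow> real" where
  "hi v g = max (inner v (pathstart g)) (inner v (pathfinish g))"

lemma inner_Re: "inner v x = Re (cnj v * x)"
  by (simp add: inner_complex_def)

lemma recon:
  assumes "norm v = 1" "inner v x = inner v y" "Im (cnj v * x) = Im (cnj v * y)"
  shows "x = y"
proof -
  have "cnj v * x = cnj v * y" using assms(2,3) by (simp add: inner_Re complex_eq_iff)
  moreover have "v \<noteq> 0" using assms(1) by auto
  ultimately show ?thesis by simp
qed

lemma aux_seg: fixes a1 a2 b1 b2 t :: real
  shows "a2 + ((t - a1)/(b1 - a1))*(b2-a2) = ((b2-a2)/(b1-a1))*t + (a2 - a1*((b2-a2)/(b1-a1)))"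
proof -
  define k where "k = (b2-a2)/(b1-a1)"
  have "((t - a1)/(b1 - a1))*(b2-a2) = (t-a1)*k" unfolding k_def by simp
  then show ?thesis unfolding k_def[symmetric] by (simp add: algebra_simps)
qed

locale mcurve =
  fixes v :: complex and gs :: "(real \<Rightarrow> complex) list" and C :: "complex set"
  assumes cc: "circular_curve gs C" and dm: "dir_monotone v C" and nv: "norm v = 1"
begin

lemma inj: "inj_on (inner v) C"
proof -
  obtain f h where hom: "homeomorphism {0..1::real} C f h" and
    mono: "\<forall>a\<in>{0..1}. \<forall>b\<in>{0..1}. a < b \<longrightarrow> inner v (f a) < inner v (f b)"
    using dm unfolding dir_monotone_def by blast
  show ?thesis
  proof (rule inj_onI)
    fix x y assume x: "x \<in> C" and y: "y \<in> C" and e: "inner v x = inner v y"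
    have hx: "h x \<in> {0..1}" "f (h x) = x" using hom x
      by (auto simp: homeomorphism_def)
    have hy: "h y \<in> {0..1}" "f (h y) = y" using hom y
      by (auto simp: homeomorphism_def)
    have "\<not> h x < h y" using mono hx hy e by force
    moreover have "\<not> h y < h x" using mono hx hy e by force
    ultimately have "h x = h y" by simp
    then show "x = y" using hx hy by metis
  qed
qed

lemma compactC: "compact C"
proof -
  obtain f h where hom: "homeomorphism {0..1::real} C f h"
    using dm unfolding dir_monotone_def by blast
  then show ?thesis
    by (metis compact_Icc compact_continuous_image homeomorphism_cont1 homeomorphism_image1)
qed

definition Fc where "Fc = (SOME F. homeomorphism C (inner v ` C) (inner v) F)"

lemma homF: "homeomorphism C (inner v ` C) (inner v) Fc"
proof -
  have "\<exists>F. homeomorphism C (inner v ` C) (inner v) F"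
    by (rule homeomorphism_compact[OF compactC]) (auto intro: continuous_intros inj)
  then show ?thesis unfolding Fc_def by (rule someI_ex)
qed

lemma F_inv: "x \<in> C \<Longrightarrow> Fc (inner v x) = x"
  using homF homeomorphism_apply1 by blast
lemma F_pr: "t \<in> inner v ` C \<Longrightarrow> inner v (Fc t) = t"
  using homF homeomorphism_apply2 by blast
lemma F_C: "t \<in> inner v ` C \<Longrightarrow> Fc t \<in> C"
  using homF homeomorphism_image2 by blast
lemma F_cont: "continuous_on (inner v ` C) Fc"
  using homF homeomorphism_cont2 by blast

lemma arc_sub: "g \<in> set gs \<Longrightarrow> path_image g \<subseteq> C"
  using cc unfolding circular_curve_def by auto
lemma carc: "g \<in> set gs \<Longrightarrow> circular_arc g"
  using cc unfolding circular_curve_def by auto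
lemma arc_g: "g \<in> set gs \<Longrightarrow> arc g"
  using carc circular_arc_def by blast

lemma C_Un: "C = (\<Union>g\<in>set gs. path_image g)"
  using cc unfolding circular_curve_def by auto

lemma img: assumes "g \<in> set gs" shows "inner v ` path_image g = {lo v g..hi v g}"
proof -
  have a: "arc g" using arc_g assms .
  have cs: "closed_segment (0::real) 1 = {0..1}" by (simp add: closed_segment_eq_real_ivl)
  have "inner v ` path_image g = (inner v \<circ> g) ` closed_segment 0 1"
    unfolding path_image_def cs by (simp add: image_comp)
  also have "\<dots> = closed_segment ((inner v \<circ> g) 0) ((inner v \<circ> g) 1)"
  proof (rule continuous_injective_image_segment_1)
    show "continuous_on (closed_segment 0 1) (inner v \<circ> g)"
      unfolding cs using a unfolding arc_def path_def
      by (intro continuous_on_compose) (auto intro: continuous_intros)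
    have "inj_on g {0..1}" using a arc_def by blast
    moreover have "inj_on (inner v) (g ` {0..1})"
      using inj arc_sub[OF assms] unfolding path_image_def by (rule inj_on_subset)
    ultimately show "inj_on (inner v \<circ> g) (closed_segment 0 1)"
      unfolding cs by (rule comp_inj_on)
  qed
  also have "\<dots> = {lo v g..hi v g}"
    unfolding lo_def hi_def pathstart_def pathfinish_def closed_segment_eq_real_ivl by auto
  finally show ?thesis .
qed

lemma ends_C: "g \<in> set gs \<Longrightarrow> pathstart g \<in> C \<and> pathfinish g \<in> C"
  using arc_sub by auto

lemma lo_lt_hi: assumes "g \<in> set gs" shows "lo v g < hi v g"
proof -
  have "pathstart g \<noteq> pathfinish g" using arc_distinct_ends arc_g[OF assms] by metis
  then have "inner v (pathstart g) \<noteq> inner v (pathfinish g)"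
    using inj ends_C[OF assms] by (meson inj_on_def)
  then show ?thesis unfolding lo_def hi_def by auto
qed

lemma F_in: assumes "g \<in> set gs" "t \<in> {lo v g..hi v g}" shows "Fc t \<in> path_image g"
proof -
  obtain x where x: "x \<in> path_image g" "t = inner v x" using img[OF assms(1)] assms(2) by force
  then show ?thesis using F_inv arc_sub[OF assms(1)] by auto
qed

lemma I_sub: "g \<in> set gs \<Longrightarrow> {lo v g..hi v g} \<subseteq> inner v ` C"
  using img arc_sub by blast

lemma end_pt: assumes "g \<in> set gs" "x \<in> path_image g" "inner v x = lo v g \<or> inner v x = hi v g"
  shows "x = pathstart g \<or> x = pathfinish g"
proof -
  have "inner v x = inner v (pathstart g) \<or> inner v x = inner v (pathfinish g)"
    using assms(3) unfolding lo_def hi_def by linarith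
  moreover have "x \<in> C" using assms(1,2) arc_sub by auto
  ultimately show ?thesis using inj ends_C[OF assms(1)] by (meson inj_on_def)
qed

lemma inter_ends: assumes "g \<in> set gs" "h \<in> set gs" "g \<noteq> h"
  shows "path_image g \<inter> path_image h \<subseteq> {pathstart g, pathfinish g}"
proof -
  obtain i where i: "i < length gs" "gs!i = g" using assms(1) by (meson in_set_conv_nth)
  obtain j where j: "j < length gs" "gs!j = h" using assms(2) by (meson in_set_conv_nth)
  have "i \<noteq> j" using i j assms(3) by auto
  then show ?thesis using cc i j unfolding circular_curve_def by blast
qed

lemma halfopen: assumes "g \<in> set gs" "h \<in> set gs" "lo v g \<le> s" "s < hi v g" "lo v h \<le> s" "s < hi v h"
  shows "g = h"
proof (rule ccontr)
  assume ne: "g \<noteq> h"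
  define m where "m = min (hi v g) (hi v h)"
  have sm: "s < m" using assms unfolding m_def by auto
  have sub: "Fc ` {s<..<m} \<subseteq> path_image g \<inter> path_image h"
    using F_in assms unfolding m_def by auto
  have "inj_on Fc {s<..<m}"
  proof (rule inj_onI)
    fix a b assume "a \<in> {s<..<m}" "b \<in> {s<..<m}" "Fc a = Fc b"
    moreover have "a \<in> inner v ` C" "b \<in> inner v ` C"
      using I_sub[OF assms(1)] \<open>a \<in> _\<close> \<open>b \<in> _\<close> assms unfolding m_def by auto
    ultimately show "a = b" using F_pr by metis
  qed
  moreover have "finite (Fc ` {s<..<m})"
    using sub inter_ends[OF assms(1,2) ne] by (meson finite.emptyI finite_insert finite_subset)
  ultimately have "finite {s<..<m}" using finite_image_iff by blast
  then show False using infinite_Ioo[OF sm] by blast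
qed

definition yF where "yF t = Im (cnj v * Fc t)"

lemma yF_cont: "g \<in> set gs \<Longrightarrow> continuous_on {lo v g..hi v g} yF"
  unfolding yF_def
  by (intro continuous_intros continuous_on_subset[OF F_cont] I_sub)

lemma form: assumes "g \<in> set gs"
  shows "(\<exists>al be. \<forall>t\<in>{lo v g..hi v g}. yF t = al*t+be) \<or>
         (\<exists>tc yc R. \<forall>t\<in>{lo v g..hi v g}. (t-tc)^2 + (yF t - yc)^2 = R)"
proof -
  have pr: "Re (cnj v * Fc t) = t" if "t \<in> {lo v g..hi v g}" for t
    using F_pr I_sub[OF assms] that inner_Re by (metis subsetD)
  consider (circ) c r where "path_image g \<subseteq> sphere c r"
    | (seg) "path_image g = closed_segment (pathstart g) (pathfinish g)"
    using carc[OF assms] unfolding circular_arc_def by blast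
  then show ?thesis
  proof cases
    case circ
    have "\<forall>t\<in>{lo v g..hi v g}. (t - Re (cnj v * c))^2 + (yF t - Im (cnj v * c))^2 = r^2"
    proof
      fix t assume t: "t \<in> {lo v g..hi v g}"
      have "Fc t \<in> sphere c r" using circ F_in[OF assms t] by auto
      then have d: "cmod (Fc t - c) = r" by (simp add: dist_norm norm_minus_commute)
      have "cmod (cnj v * (Fc t - c)) = r" using d nv by (simp add: norm_mult)
      then have "(Re (cnj v * (Fc t - c)))^2 + (Im (cnj v * (Fc t - c)))^2 = r^2"
        using cmod_power2 by metis
      then show "(t - Re (cnj v * c))^2 + (yF t - Im (cnj v * c))^2 = r^2"
        using pr[OF t] unfolding yF_def by (simp add: right_diff_distrib)
    qed
    then show ?thesis by blast
  next
    case seg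
    define A where "A = cnj v * pathstart g"
    define B where "B = cnj v * pathfinish g"
    have neq: "Re A \<noteq> Re B"
    proof -
      have "pathstart g \<noteq> pathfinish g" using arc_distinct_ends arc_g[OF assms] by metis
      then have "inner v (pathstart g) \<noteq> inner v (pathfinish g)"
        using inj ends_C[OF assms] by (meson inj_on_def)
      then show ?thesis unfolding A_def B_def inner_Re .
    qed
    define al where "al = (Im B - Im A) / (Re B - Re A)"
    define be where "be = Im A - Re A * al"
    have "\<forall>t\<in>{lo v g..hi v g}. yF t = al*t+be"
    proof
      fix t assume t: "t \<in> {lo v g..hi v g}"
      have "Fc t \<in> closed_segment (pathstart g) (pathfinish g)" using F_in[OF assms t] seg by simp
      then obtain u where u: "Fc t = (1 - u) *\<^sub>R pathstart g + u *\<^sub>R pathfinish g"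
        unfolding closed_segment_def by blast
      have z: "cnj v * Fc t = of_real (1-u) * A + of_real u * B"
        unfolding u A_def B_def by (simp add: scaleR_conv_of_real algebra_simps)
      have re: "t = Re A + u * (Re B - Re A)" using pr[OF t] z by (simp add: algebra_simps)
      have im: "yF t = Im A + u * (Im B - Im A)" unfolding yF_def z by (simp add: algebra_simps)
      have d: "Re B - Re A \<noteq> 0" using neq by simp
      have uu: "u = (t - Re A) / (Re B - Re A)" using re d by (simp add: field_simps)
      show "yF t = al*t+be" unfolding im uu al_def be_def by (rule aux_seg)
    qed
    then show ?thesis by blast
  qed
qed

end



lemma finite_av: "finite (arc_vertices gs)"
  unfolding arc_vertices_def by auto

lemma restrict_form:
  assumes "S \<subseteq> T"
    "(\<exists>al be. \<forall>t\<in>T. y t = al*t+be) \<or> (\<exists>tc yc R. \<forall>t\<in>T. (t-tc)^2 + (y t - yc)^2 = R)"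
  shows "(\<exists>al be. \<forall>t\<in>S. y t = al*t+be) \<or> (\<exists>tc yc R. \<forall>t\<in>S. (t-tc)^2 + (y t - yc)^2 = R)"
  using assms by blast

theorem mainTheorem12:
  shows "\<exists>K::real. \<forall>gs gs' C C'.
     circular_curve gs C \<longrightarrow> circular_curve gs' C' \<longrightarrow> mutually_monotone C C' \<longrightarrow>
     finite (proper_intersections C C') \<and>
     real (card (proper_intersections C C')) \<le> K * real (complexity gs + complexity gs')"
proof (rule exI[of _ 3], intro allI impI)
  fix gs gs' C C'
  assume c1: "circular_curve gs C" and c2: "circular_curve gs' C'" and mm: "mutually_monotone C C'"
  obtain v where nv: "norm v = 1" and d1: "dir_monotone v C" and d2: "dir_monotone v C'"
    using mm unfolding mutually_monotone_def by blast
  interpret A: mcurve v gs C using c1 d1 nv by unfold_locales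
  interpret B: mcurve v gs' C' using c2 d2 nv by unfold_locales
  define V where "V = arc_vertices gs \<union> arc_vertices gs'"
  have finV: "finite V" unfolding V_def using finite_av by auto
  define P where "P = {(g,g'). g \<in> set gs \<and> g' \<in> set gs' \<and> max (lo v g) (lo v g') < min (hi v g) (hi v g')}"
  define Q where "Q = (\<lambda>(g,g'). A.Fc ` Iso (max (lo v g) (lo v g')) (min (hi v g) (hi v g')) A.yF B.yF)"
  have finP: "finite P"
    by (rule finite_subset[of _ "set gs \<times> set gs'"]) (auto simp: P_def)
  have vA: "pathstart g \<in> V \<and> pathfinish g \<in> V" if "g \<in> set gs" for g
    using that unfolding V_def arc_vertices_def by auto
  have vB: "pathstart g \<in> V \<and> pathfinish g \<in> V" if "g \<in> set gs'" for g
    using that unfolding V_def arc_vertices_def by auto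
  have cQ: "finite (Q pq) \<and> card (Q pq) \<le> 2" if pq: "pq \<in> P" for pq
  proof -
    obtain g g' where gg: "pq = (g,g')" by (cases pq)
    define l where "l = max (lo v g) (lo v g')"
    define u where "u = min (hi v g) (hi v g')"
    have g: "g \<in> set gs" and g': "g' \<in> set gs'" and lu: "l < u"
      using pq unfolding gg P_def l_def u_def by auto
    have J1: "{l<..<u} \<subseteq> {lo v g..hi v g}" and J2: "{l<..<u} \<subseteq> {lo v g'..hi v g'}"
      unfolding l_def u_def by auto
    have "finite (Iso l u A.yF B.yF) \<and> card (Iso l u A.yF B.yF) \<le> 2"
    proof (rule iso_card[OF lu])
      show "continuous_on {l<..<u} A.yF" using continuous_on_subset[OF A.yF_cont[OF g] J1] .
      show "continuous_on {l<..<u} B.yF" using continuous_on_subset[OF B.yF_cont[OF g'] J2] .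
      show "(\<exists>al be. \<forall>t\<in>{l<..<u}. A.yF t = al*t+be) \<or> (\<exists>tc yc R. \<forall>t\<in>{l<..<u}. (t-tc)^2 + (A.yF t - yc)^2 = R)"
        by (rule restrict_form[OF J1 A.form[OF g]])
      show "(\<exists>al be. \<forall>t\<in>{l<..<u}. B.yF t = al*t+be) \<or> (\<exists>tc yc R. \<forall>t\<in>{l<..<u}. (t-tc)^2 + (B.yF t - yc)^2 = R)"
        by (rule restrict_form[OF J2 B.form[OF g']])
    qed
    moreover have "Q pq = A.Fc ` Iso l u A.yF B.yF" unfolding Q_def gg l_def u_def by simp
    ultimately show ?thesis using card_image_le by (metis finite_imageI order_trans)
  qed
  have cP: "card P \<le> card V"
  proof -
    define mu where "mu = (\<lambda>(g::real\<Rightarrow>complex, g'::real\<Rightarrow>complex). max (lo v g) (lo v g'))"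
    have "inj_on mu P"
    proof (rule inj_onI)
      fix x y assume x: "x \<in> P" and y: "y \<in> P" and e: "mu x = mu y"
      obtain g g' where xg: "x = (g,g')" by (cases x)
      obtain h h' where yh: "y = (h,h')" by (cases y)
      let ?s = "max (lo v g) (lo v g')"
      have s2: "?s = max (lo v h) (lo v h')" using e unfolding xg yh mu_def by simp
      have gs: "g \<in> set gs" "g' \<in> set gs'" "?s < hi v g" "?s < hi v g'"
        using x unfolding xg P_def by auto
      have hs: "h \<in> set gs" "h' \<in> set gs'" "?s < hi v h" "?s < hi v h'"
        using y s2 unfolding yh P_def by auto
      have "g = h"
        by (rule A.halfopen[OF gs(1) hs(1) _ gs(3) _ hs(3)]) (use s2 in auto)
      moreover have "g' = h'"
        by (rule B.halfopen[OF gs(2) hs(2) _ gs(4) _ hs(4)]) (use s2 in auto)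
      ultimately show "x = y" unfolding xg yh by simp
    qed
    moreover have "mu ` P \<subseteq> inner v ` V"
    proof
      fix s assume "s \<in> mu ` P"
      then obtain g g' where gg: "(g,g') \<in> P" "s = max (lo v g) (lo v g')" unfolding mu_def by auto
      have g: "g \<in> set gs" "g' \<in> set gs'" using gg(1) unfolding P_def by auto
      have "lo v g \<in> inner v ` V" using vA[OF g(1)] unfolding lo_def min_def by auto
      moreover have "lo v g' \<in> inner v ` V" using vB[OF g(2)] unfolding lo_def min_def by auto
      ultimately show "s \<in> inner v ` V" using gg(2) unfolding max_def by auto
    qed
    ultimately have "card P \<le> card (inner v ` V)"
      by (metis card_image card_mono finV finite_imageI)
    also have "\<dots> \<le> card V" by (rule card_image_le[OF finV])
    finally show ?thesis .
  qed
  have sub: "proper_intersections C C' \<subseteq> V \<union> \<Union>(Q ` P)"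
  proof
    fix p assume p: "p \<in> proper_intersections C C'"
    show "p \<in> V \<union> \<Union>(Q ` P)"
    proof (cases "p \<in> V")
      case True then show ?thesis by simp
    next
      case nV: False
      have pC: "p \<in> C" "p \<in> C'" and iso: "p isolated_in (C \<inter> C')"
        using p unfolding proper_intersections_def by auto
      obtain g where g: "g \<in> set gs" "p \<in> path_image g" using pC(1) A.C_Un by auto
      obtain g' where g': "g' \<in> set gs'" "p \<in> path_image g'" using pC(2) B.C_Un by auto
      define t where "t = inner v p"
      have t1: "lo v g < t" "t < hi v g"
      proof -
        have "t \<in> {lo v g..hi v g}" using A.img[OF g(1)] g(2) unfolding t_def by blast
        moreover have "t \<noteq> lo v g" "t \<noteq> hi v g"
          using A.end_pt[OF g] vA[OF g(1)] nV unfolding t_def by auto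
        ultimately show "lo v g < t" "t < hi v g" by auto
      qed
      have t2: "lo v g' < t" "t < hi v g'"
      proof -
        have "t \<in> {lo v g'..hi v g'}" using B.img[OF g'(1)] g'(2) unfolding t_def by blast
        moreover have "t \<noteq> lo v g'" "t \<noteq> hi v g'"
          using B.end_pt[OF g'] vB[OF g'(1)] nV unfolding t_def by auto
        ultimately show "lo v g' < t" "t < hi v g'" by auto
      qed
      define l where "l = max (lo v g) (lo v g')"
      define u where "u = min (hi v g) (hi v g')"
      have tJ: "t \<in> {l<..<u}" using t1 t2 unfolding l_def u_def by auto
      have P: "(g,g') \<in> P" using g g' t1 t2 unfolding P_def by auto
      have J1: "{l<..<u} \<subseteq> inner v ` C" using A.I_sub[OF g(1)] unfolding l_def u_def by auto
      have J2: "{l<..<u} \<subseteq> inner v ` C'" using B.I_sub[OF g'(1)] unfolding l_def u_def by auto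
      have pA: "A.Fc t = p" unfolding t_def using A.F_inv pC by blast
      have pB: "B.Fc t = p" unfolding t_def using B.F_inv pC by blast
      have eqAB: "A.Fc s = B.Fc s" if "s \<in> {l<..<u}" "A.yF s = B.yF s" for s
      proof (rule recon[OF nv])
        have "s \<in> inner v ` C" "s \<in> inner v ` C'" using J1 J2 that(1) by auto
        then show "inner v (A.Fc s) = inner v (B.Fc s)" using A.F_pr B.F_pr by metis
        show "Im (cnj v * A.Fc s) = Im (cnj v * B.Fc s)" using that(2) unfolding A.yF_def B.yF_def .
      qed
      obtain e where e: "e > 0" "\<forall>y\<in>C \<inter> C'. dist p y < e \<longrightarrow> y = p"
        using iso unfolding isolated_in_dist_Ex_iff by blast
      obtain d where d: "d > 0" "\<forall>s\<in>inner v ` C. dist s t < d \<longrightarrow> dist (A.Fc s) (A.Fc t) < e"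
        using A.F_cont J1 tJ e(1) unfolding continuous_on_iff by blast
      have "t \<in> Iso l u A.yF B.yF"
        unfolding Iso_def
      proof (intro CollectI conjI exI[of _ d] ballI impI)
        show "t \<in> {l<..<u}" by (rule tJ)
        show "A.yF t = B.yF t" unfolding A.yF_def B.yF_def pA pB ..
        show "d > 0" by (rule d(1))
        fix s assume s: "s \<in> {l<..<u}" "A.yF s = B.yF s" "\<bar>s - t\<bar> < d"
        have sC: "A.Fc s \<in> C \<inter> C'" using A.F_C B.F_C J1 J2 s(1) eqAB[OF s(1,2)] by force
        have "dist (A.Fc s) p < e" using d(2) J1 s(1,3) pA by (auto simp: dist_real_def)
        then have "A.Fc s = p" using e(2) sC by (simp add: dist_commute)
        then show "s = t" using A.F_pr J1 s(1) unfolding t_def by force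
      qed
      then have "p \<in> Q (g,g')" unfolding Q_def l_def u_def using pA by force
      then show ?thesis using P by blast
    qed
  qed
  have finU: "finite (\<Union>(Q ` P))" using finP cQ by blast
  have "card (\<Union>(Q ` P)) \<le> (\<Sum>pq\<in>P. card (Q pq))" by (rule card_UN_le[OF finP])
  also have "\<dots> \<le> (\<Sum>pq\<in>P. 2)" by (rule sum_mono) (use cQ in auto)
  also have "\<dots> = 2 * card P" by simp
  finally have cU: "card (\<Union>(Q ` P)) \<le> 2 * card V" using cP by linarith
  have fin: "finite (proper_intersections C C')" using sub finV finU finite_subset by blast
  have "card (proper_intersections C C') \<le> card (V \<union> \<Union>(Q ` P))"
    using sub finV finU by (intro card_mono) auto
  also have "\<dots> \<le> card V + card (\<Union>(Q ` P))" by (rule card_Un_le)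
  also have "\<dots> \<le> 3 * card V" using cU by linarith
  also have "\<dots> \<le> 3 * (complexity gs + complexity gs')"
  proof -
    have "card V \<le> card (arc_vertices gs) + card (arc_vertices gs')" unfolding V_def by (rule card_Un_le)
    also have "\<dots> \<le> complexity gs + complexity gs'" unfolding complexity_def by linarith
    finally show ?thesis by simp
  qed
  finally have "card (proper_intersections C C') \<le> 3 * (complexity gs + complexity gs')" .
  then have "real (card (proper_intersections C C')) \<le> real (3 * (complexity gs + complexity gs'))"
    by (rule of_nat_mono)
  then show "finite (proper_intersections C C') \<and>
     real (card (proper_intersections C C')) \<le> 3 * real (complexity gs + complexity gs')"
    using fin by simp
qed

end
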